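(* Let $M$ be a monoid in $\mathcal{C}$. Then $M$ is finitary if and only if every face submonoid of $M$ is finitary; likewise, $M$ is weakly finitary if and only if every face submonoid of $M$ is weakly finitary.
   Context: Convention: all monoids are commutative, cancellative, and reduced, written additively; $M^\bullet=M\setminus\{0\}$. $\mathcal{C}$ is the class of monoids isomorphic to a submonoid of a free commutative monoid of finite rank (equivalently, of $(\mathbb{N}^d,+)$). $M$ is regarded as a submonoid of $V=\mathbb{R}\otimes_\mathbb{Z}\mathrm{gp}(M)$; $\mathsf{cone}_V(M)$ is the set of finite nonnegative linear combinations of elements of $M$. A face of a cone $C$ is a cone $F\subseteq C$ such that whenever $x,y\in C$ and $F$ meets the open segment between $x$ and $y$, then $x,y\in F$; a face submonoid is $M\cap F$ for a face $F$ of $\mathsf{cone}_V(M)$. A monoid is a BFM if every element is a sum of atoms and each element has a finite set of factorization lengths. $M$ is finitary if it is a BFM and there exist a finite $S\subseteq M$ and a positive integer $n$ with $nM^\bullet\subseteq S+M$, where $nM^\bullet=\{x_1+\dots+x_n: x_i\in M^\bullet\}$. $M$ is weakly finitary if there exist a finite $S\subseteq M$ and a positive integer $n$ with $nx\in S+M$ for all $x\in M^\bullet$. *)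

theory Defs
  imports "HOL-Analysis.Analysis"
begin

text \<open>Monoids in the class C are modelled as submonoids of (nat^d, +), with d = CARD('n).\<close>

definition submonoid :: "'a::comm_monoid_add set \<Rightarrow> bool" where
  "submonoid M \<longleftrightarrow> 0 \<in> M \<and> (\<forall>x\<in>M. \<forall>y\<in>M. x + y \<in> M)"

definition atoms :: "'a::comm_monoid_add set \<Rightarrow> 'a set" where
  "atoms M = {a \<in> M. a \<noteq> 0 \<and> (\<forall>b\<in>M. \<forall>c\<in>M. a = b + c \<longrightarrow> b = 0 \<or> c = 0)}"

definition lengths :: "'a::comm_monoid_add set \<Rightarrow> 'a \<Rightarrow> nat set" where
  "lengths M x = {length as | as. set as \<subseteq> atoms M \<and> sum_list as = x}"

definition BFM :: "'a::comm_monoid_add set \<Rightarrow> bool" where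
  "BFM M \<longleftrightarrow> (\<forall>x\<in>M. lengths M x \<noteq> {} \<and> finite (lengths M x))"

definition nfold_nonzero :: "nat \<Rightarrow> 'a::comm_monoid_add set \<Rightarrow> 'a set" where
  "nfold_nonzero n M = {sum_list xs | xs. length xs = n \<and> set xs \<subseteq> M - {0}}"

definition setplus :: "'a::comm_monoid_add set \<Rightarrow> 'a set \<Rightarrow> 'a set" where
  "setplus S M = {s + m | s m. s \<in> S \<and> m \<in> M}"

definition finitary :: "'a::comm_monoid_add set \<Rightarrow> bool" where
  "finitary M \<longleftrightarrow> BFM M \<and>
     (\<exists>S n. finite S \<and> S \<subseteq> M \<and> n > 0 \<and> nfold_nonzero n M \<subseteq> setplus S M)"

definition weakly_finitary :: "'a::comm_monoid_add set \<Rightarrow> bool" where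
  "weakly_finitary M \<longleftrightarrow>
     (\<exists>S n. finite S \<and> S \<subseteq> M \<and> n > 0 \<and>
        (\<forall>x \<in> M - {0}. sum_list (replicate n x) \<in> setplus S M))"

definition emb :: "nat ^ 'n \<Rightarrow> real ^ 'n" where
  "emb x = (\<chi> i. real (x $ i))"

definition mcone :: "(nat ^ 'n) set \<Rightarrow> (real ^ 'n) set" where
  "mcone M = {\<Sum>i<k. c i *\<^sub>R emb (v i) | (k::nat) c v. (\<forall>i<k. c i \<ge> 0 \<and> v i \<in> M)}"

definition is_cone :: "'a::real_vector set \<Rightarrow> bool" where
  "is_cone F \<longleftrightarrow> 0 \<in> F \<and> (\<forall>x\<in>F. \<forall>y\<in>F. x + y \<in> F) \<and> (\<forall>c\<ge>0. \<forall>x\<in>F. c *\<^sub>R x \<in> F)"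

definition is_face :: "'a::real_vector set \<Rightarrow> 'a set \<Rightarrow> bool" where
  "is_face C F \<longleftrightarrow> is_cone F \<and> F \<subseteq> C \<and>
     (\<forall>x\<in>C. \<forall>y\<in>C. (\<exists>t. 0 < t \<and> t < 1 \<and> (1 - t) *\<^sub>R x + t *\<^sub>R y \<in> F) \<longrightarrow> x \<in> F \<and> y \<in> F)"

definition face_submonoid :: "(nat ^ 'n) set \<Rightarrow> (real ^ 'n) set \<Rightarrow> (nat ^ 'n) set" where
  "face_submonoid M F = {x \<in> M. emb x \<in> F}"

end

theory Submission
  imports Defs
begin

lemma sum_split_lt: "(\<Sum>i<a+b. f i) = (\<Sum>i<a. f i) + (\<Sum>i<b. f (a+i)) " for f :: "nat \<Rightarrow> 'b::comm_monoid_add"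
  by (induction b) (simp_all add: add.assoc)

lemma emb_add: "emb (x + y) = emb x + emb y"
  by (simp add: emb_def vec_eq_iff)

lemma emb_mcone: "x \<in> M \<Longrightarrow> c \<ge> 0 \<Longrightarrow> c *\<^sub>R emb x \<in> mcone M"
  unfolding mcone_def
  by (rule CollectI, rule exI[of _ 1], rule exI[of _ "\<lambda>_. c"], rule exI[of _ "\<lambda>_. x"]) simp

lemma mcone_cone: "is_cone (mcone M)"
  unfolding is_cone_def
proof (intro conjI ballI allI impI)
  show "0 \<in> mcone M" unfolding mcone_def
    by (rule CollectI, rule exI[of _ 0]) simp
next
  fix x y assume "x \<in> mcone M" "y \<in> mcone M"
  obtain k1 :: nat and c1 v1 where
    x: "x = (\<Sum>i<k1. c1 i *\<^sub>R emb (v1 i))" "\<forall>i<k1. c1 i \<ge> 0 \<and> v1 i \<in> M"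
    using \<open>x \<in> mcone M\<close> unfolding mcone_def mem_Collect_eq by (elim exE conjE) (rule that, assumption+)
  obtain k2 :: nat and c2 v2 where
    y: "y = (\<Sum>i<k2. c2 i *\<^sub>R emb (v2 i))" "\<forall>i<k2. c2 i \<ge> 0 \<and> v2 i \<in> M"
    using \<open>y \<in> mcone M\<close> unfolding mcone_def mem_Collect_eq by (elim exE conjE) (rule that, assumption+)
  define c where "c i = (if i < k1 then c1 i else c2 (i - k1))" for i
  define v where "v i = (if i < k1 then v1 i else v2 (i - k1))" for i
  have "x + y = (\<Sum>i<k1+k2. c i *\<^sub>R emb (v i))"
    unfolding sum_split_lt x y c_def v_def by simp
  moreover have "\<forall>i<k1+k2. c i \<ge> 0 \<and> v i \<in> M"
    using x(2) y(2) unfolding c_def v_def by auto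
  ultimately show "x + y \<in> mcone M" unfolding mcone_def by blast
next
  fix a :: real and x assume "0 \<le> a" "x \<in> mcone M"
  then obtain k :: nat and c v where
    x: "x = (\<Sum>i<k. c i *\<^sub>R emb (v i))" "\<forall>i<k. c i \<ge> 0 \<and> v i \<in> M"
    unfolding mcone_def by blast
  have "a *\<^sub>R x = (\<Sum>i<k. (a * c i) *\<^sub>R emb (v i))"
    unfolding x by (simp add: scaleR_sum_right)
  moreover have "\<forall>i<k. a * c i \<ge> 0 \<and> v i \<in> M" using x(2) \<open>0 \<le> a\<close> by auto
  ultimately show "a *\<^sub>R x \<in> mcone M" unfolding mcone_def mem_Collect_eq
    by (intro exI[of _ k] exI[of _ "\<lambda>i. a * c i"] exI[of _ v]) simp
qed

lemma mcone_face: "is_face (mcone M) (mcone M)"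
  unfolding is_face_def using mcone_cone by blast

lemma face_full: "face_submonoid M (mcone M) = M"
  unfolding face_submonoid_def using emb_mcone[of _ M 1] by auto

locale facectx =
  fixes M :: "(nat ^ 'n) set" and F
  assumes sm: "submonoid M" and fc: "is_face (mcone M) F"
begin

abbreviation "N \<equiv> face_submonoid M F"

lemma N_sub: "N \<subseteq> M" unfolding face_submonoid_def by auto

lemma F_cone: "is_cone F" using fc unfolding is_face_def by blast

lemma F_add: "u \<in> F \<Longrightarrow> w \<in> F \<Longrightarrow> u + w \<in> F"
  using F_cone unfolding is_cone_def by blast

lemma F_scale: "c \<ge> 0 \<Longrightarrow> u \<in> F \<Longrightarrow> c *\<^sub>R u \<in> F"
  using F_cone unfolding is_cone_def by blast

lemma M_add: "x \<in> M \<Longrightarrow> y \<in> M \<Longrightarrow> x + y \<in> M"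
  using sm unfolding submonoid_def by blast

lemma N_add: "x \<in> N \<Longrightarrow> y \<in> N \<Longrightarrow> x + y \<in> N"
  unfolding face_submonoid_def mem_Collect_eq emb_add using M_add F_add by blast

lemma N_zero: "0 \<in> N"
proof -
  have "emb (0::nat^'n) = 0" by (simp add: emb_def vec_eq_iff)
  moreover have "(0::real^'n) \<in> F" using F_cone unfolding is_cone_def by blast
  moreover have "(0::nat^'n) \<in> M" using sm unfolding submonoid_def by blast
  ultimately show ?thesis unfolding face_submonoid_def by simp
qed

lemma N_sumlist: "set xs \<subseteq> N \<Longrightarrow> sum_list xs \<in> N"
  by (induction xs) (simp_all add: N_zero N_add)

lemma div_closed: assumes "x \<in> M" "y \<in> M" "x + y \<in> N" shows "x \<in> N" "y \<in> N"
proof -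
  have cx: "2 *\<^sub>R emb x \<in> mcone M" and cy: "2 *\<^sub>R emb y \<in> mcone M"
    using emb_mcone[of x M 2] emb_mcone[of y M 2] assms by auto
  have "(1 - 1/2) *\<^sub>R (2 *\<^sub>R emb x) + (1/2::real) *\<^sub>R (2 *\<^sub>R emb y) = emb (x + y)"
    by (simp add: emb_add)
  also have "\<dots> \<in> F" using assms(3) unfolding face_submonoid_def by auto
  finally have h: "(1 - 1/2) *\<^sub>R (2 *\<^sub>R emb x) + (1/2::real) *\<^sub>R (2 *\<^sub>R emb y) \<in> F" .
  have "2 *\<^sub>R emb x \<in> F \<and> 2 *\<^sub>R emb y \<in> F"
  proof -
    have "\<forall>x\<in>mcone M. \<forall>y\<in>mcone M. (\<exists>t. 0 < t \<and> t < 1 \<and> (1 - t) *\<^sub>R x + t *\<^sub>R y \<in> F) \<longrightarrow> x \<in> F \<and> y \<in> F"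
      using fc unfolding is_face_def by blast
    moreover have "\<exists>t. 0 < t \<and> t < 1 \<and> (1 - t) *\<^sub>R (2 *\<^sub>R emb x) + t *\<^sub>R (2 *\<^sub>R emb y) \<in> F"
      by (rule exI[of _ "1/2"]) (use h in simp)
    ultimately show ?thesis using cx cy by blast
  qed
  then have "emb x \<in> F \<and> emb y \<in> F"
    using F_scale[of "1/2" "2 *\<^sub>R emb x"] F_scale[of "1/2" "2 *\<^sub>R emb y"] by simp
  then show "x \<in> N" "y \<in> N" using assms(1,2) unfolding face_submonoid_def by auto
qed

lemma atoms_N: "atoms N = atoms M \<inter> N"
proof
  show "atoms N \<subseteq> atoms M \<inter> N"
  proof
    fix a assume a: "a \<in> atoms N"
    then have aN: "a \<in> N" unfolding atoms_def by auto
    have "a \<in> atoms M" unfolding atoms_def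
    proof (intro CollectI conjI ballI impI)
      show "a \<in> M" using aN N_sub by auto
      show "a \<noteq> 0" using a unfolding atoms_def by auto
      fix b c assume "b \<in> M" "c \<in> M" "a = b + c"
      then have "b \<in> N" "c \<in> N" using div_closed aN by auto
      then show "b = 0 \<or> c = 0" using a \<open>a = b + c\<close> unfolding atoms_def by auto
    qed
    then show "a \<in> atoms M \<inter> N" using aN by auto
  qed
next
  show "atoms M \<inter> N \<subseteq> atoms N" using N_sub unfolding atoms_def by auto
qed

lemma sumlist_parts: "set as \<subseteq> M \<Longrightarrow> sum_list as \<in> N \<Longrightarrow> set as \<subseteq> N"
proof
  fix a assume as: "set as \<subseteq> M" "sum_list as \<in> N" and "a \<in> set as"
  then obtain ys zs where eq: "as = ys @ a # zs" by (metis split_list)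
  have sl: "\<And>xs. set xs \<subseteq> M \<Longrightarrow> sum_list xs \<in> M"
  proof -
    fix xs show "set xs \<subseteq> M \<Longrightarrow> sum_list xs \<in> M"
      using sm unfolding submonoid_def by (induction xs) auto
  qed
  have "sum_list as = a + (sum_list ys + sum_list zs)" unfolding eq by (simp add: algebra_simps)
  moreover have "sum_list ys + sum_list zs \<in> M" using sl as(1) eq sm unfolding submonoid_def by auto
  moreover have "a \<in> M" using as \<open>a \<in> set as\<close> by auto
  ultimately show "a \<in> N" using div_closed(1) as(2) by metis
qed

lemma lengths_N: "x \<in> N \<Longrightarrow> lengths N x = lengths M x"
proof -
  assume x: "x \<in> N"
  have am: "atoms M \<subseteq> M" unfolding atoms_def by auto
  have "\<And>as. (set as \<subseteq> atoms N \<and> sum_list as = x) = (set as \<subseteq> atoms M \<and> sum_list as = x)"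
    using atoms_N sumlist_parts x am by blast
  then show ?thesis unfolding lengths_def by simp
qed

lemma finitary_N: "finitary M \<Longrightarrow> finitary N"
proof -
  assume f: "finitary M"
  then obtain S n where S: "finite S" "S \<subseteq> M" "n > 0" "nfold_nonzero n M \<subseteq> setplus S M"
    unfolding finitary_def by blast
  have "BFM N" using f N_sub lengths_N unfolding finitary_def BFM_def by auto
  moreover have "nfold_nonzero n N \<subseteq> setplus (S \<inter> N) N"
  proof
    fix x assume x: "x \<in> nfold_nonzero n N"
    then obtain xs where xs: "x = sum_list xs" "length xs = n" "set xs \<subseteq> N - {0}"
      unfolding nfold_nonzero_def by auto
    have xN: "x \<in> N" using xs N_sumlist by auto
    have "x \<in> nfold_nonzero n M" using xs N_sub unfolding nfold_nonzero_def by blast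
    then obtain s m where "x = s + m" "s \<in> S" "m \<in> M" using S(4) unfolding setplus_def by auto
    then show "x \<in> setplus (S \<inter> N) N" using div_closed[of s m] xN S(2)
      unfolding setplus_def by auto
  qed
  ultimately show ?thesis using S unfolding finitary_def by (meson finite_Int inf_le2)
qed

lemma wfinitary_N: "weakly_finitary M \<Longrightarrow> weakly_finitary N"
proof -
  assume f: "weakly_finitary M"
  then obtain S n where S: "finite S" "S \<subseteq> M" "n > 0"
      "\<forall>x \<in> M - {0}. sum_list (replicate n x) \<in> setplus S M"
    unfolding weakly_finitary_def by blast
  have "\<forall>x \<in> N - {0}. sum_list (replicate n x) \<in> setplus (S \<inter> N) N"
  proof
    fix x assume x: "x \<in> N - {0}"
    have xN: "sum_list (replicate n x) \<in> N" proof -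
      have "set (replicate n x) \<subseteq> N" using x by (auto simp: set_replicate_conv_if)
      then show ?thesis by (rule N_sumlist)
    qed
    obtain s m where "sum_list (replicate n x) = s + m" "s \<in> S" "m \<in> M"
      using S(4) x N_sub unfolding setplus_def by blast
    then show "sum_list (replicate n x) \<in> setplus (S \<inter> N) N" using div_closed[of s m] xN S(2)
      unfolding setplus_def by auto
  qed
  then show ?thesis using S unfolding weakly_finitary_def by (meson finite_Int inf_le2)
qed

end

theorem mainTheorem16:
  fixes M :: "(nat ^ 'n) set"
  assumes "submonoid M"
  shows "(finitary M \<longleftrightarrow>
            (\<forall>F. is_face (mcone M) F \<longrightarrow> finitary (face_submonoid M F))) \<and>
         (weakly_finitary M \<longleftrightarrow>
            (\<forall>F. is_face (mcone M) F \<longrightarrow> weakly_finitary (face_submonoid M F)))"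
  using facectx.finitary_N[OF facectx.intro[OF assms]] facectx.wfinitary_N[OF facectx.intro[OF assms]]
    mcone_face[of M] face_full[of M] by auto

end
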